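(* Let $u\ge t\ge s\ge 0$ be integers and set $\lambda=(u,t,s,s)$, $\mu=(u+s,t+s)$, $\nu=(u+t,2s)$ (three partitions of $u+t+2s$). Then for every integer $k\ge1$, $$g_{k\mu,k\nu,k\lambda}=1=\tilde g_{k\mu,k\nu,k\lambda}.$$
   Context: For a partition $\alpha$ and integer $k$, $k\alpha$ is obtained by multiplying each part by $k$. The Kronecker coefficient $g_{\mu,\nu,\lambda}$ (for $\ell(\mu),\ell(\nu)\le2$, $\ell(\lambda)\le4$, same weight, parts padded with zeros) is defined by $s_\lambda(x_1y_1,x_1y_2,x_2y_1,x_2y_2)=\sum_{\mu,\nu}g_{\mu,\nu,\lambda}\,s_\mu(x_1,x_2)s_\nu(y_1,y_2)$. For integers $n,m$, $p_S(n,m)$ is the number of $(x_1,\dots,x_4)\in\mathbb{Z}_{\ge0}^4$ with $x_1+x_3+x_4=n$, $x_2+x_3+2x_4=m$ (zero if $n<0$ or $m<0$). The atomic Kronecker coefficient is $\tilde g_{\mu,\nu,\lambda}:=p_S(\nu_2-\lambda_3-\lambda_4,\ \mu_2+\nu_2-\lambda_2-\lambda_3-2\lambda_4)$. *)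

theory Defs
  imports Main Complex_Main
begin

text \<open>Partitions are lists of naturals (padded with zeros to the required length).
  Cells of the Young diagram are pairs (row, column), 0-indexed.\<close>

definition cells :: "nat list \<Rightarrow> (nat \<times> nat) set" where
  "cells la = {(i, j). i < length la \<and> j < la ! i}"

definition SSYT :: "nat list \<Rightarrow> nat \<Rightarrow> (nat \<times> nat \<Rightarrow> nat) set" where
  "SSYT la n = {T. (\<forall>c\<in>cells la. T c < n) \<and> (\<forall>c. c \<notin> cells la \<longrightarrow> T c = 0)
     \<and> (\<forall>i j. (i, j) \<in> cells la \<and> (i, Suc j) \<in> cells la \<longrightarrow> T (i, j) \<le> T (i, Suc j))
     \<and> (\<forall>i j. (i, j) \<in> cells la \<and> (Suc i, j) \<in> cells la \<longrightarrow> T (i, j) < T (Suc i, j))}"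

definition schur :: "nat list \<Rightarrow> real list \<Rightarrow> real" where
  "schur la xs = (\<Sum>T\<in>SSYT la (length xs). \<Prod>c\<in>cells la. xs ! (T c))"

definition parts2 :: "nat \<Rightarrow> nat list set" where
  "parts2 n = {[a, b] | a b. b \<le> a \<and> a + b = n}"

text \<open>Kronecker coefficient g_{mu,nu,la} for la of length 4: the coefficients of the
  expansion s_la(x1y1,x1y2,x2y1,x2y2) = sum g_{mu,nu,la} s_mu(x1,x2) s_nu(y1,y2),
  mu, nu ranging over partitions of |la| with at most two parts (other g are 0).\<close>
definition kron :: "nat list \<Rightarrow> nat list \<Rightarrow> nat list \<Rightarrow> int" where
  "kron mu nu la = (THE g :: nat list \<Rightarrow> nat list \<Rightarrow> int.
      (\<forall>a b. (a, b) \<notin> parts2 (sum_list la) \<times> parts2 (sum_list la) \<longrightarrow> g a b = 0) \<and>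
      (\<forall>x1 x2 y1 y2 :: real.
         schur la [x1*y1, x1*y2, x2*y1, x2*y2] =
         (\<Sum>(a, b)\<in>parts2 (sum_list la) \<times> parts2 (sum_list la).
             of_int (g a b) * schur a [x1, x2] * schur b [y1, y2]))) mu nu"

definition pS :: "int \<Rightarrow> int \<Rightarrow> nat" where
  "pS n m = card {(x1, x2, x3, x4). int x1 + int x3 + int x4 = n \<and> int x2 + int x3 + 2 * int x4 = m}"

definition atomic_kron :: "nat list \<Rightarrow> nat list \<Rightarrow> nat list \<Rightarrow> nat" where
  "atomic_kron mu nu la =
     pS (int (nu!1) - int (la!2) - int (la!3))
        (int (mu!1) + int (nu!1) - int (la!1) - int (la!2) - 2 * int (la!3))"

definition scale :: "nat \<Rightarrow> nat list \<Rightarrow> nat list" where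
  "scale k la = map (\<lambda>p. k * p) la"

end

theory Submission
  imports Defs
begin


definition HH :: "nat \<Rightarrow> nat set" where "HH N = {a. N \<le> 2*a \<and> a \<le> N}"

lemma finite_HH[simp]: "finite (HH N)"
  unfolding HH_def by (rule finite_subset[of _ "{..N}"]) auto

lemma swapH:
  fixes e X :: "nat \<Rightarrow> real"
  shows "(\<Sum>a\<in>HH N. e a * (\<Sum>i\<in>{N-a..a}. X i)) = (\<Sum>i\<le>N. X i * (\<Sum>a\<in>{max i (N-i)..N}. e a))"
proof -
  have "(\<Sum>a\<in>HH N. e a * (\<Sum>i\<in>{N-a..a}. X i)) = (\<Sum>a\<in>HH N. (\<Sum>i\<in>{y. y\<in>{..N} \<and> N-a \<le> y \<and> y \<le> a}. e a * X i))"
    by (rule sum.cong) (auto simp: sum_distrib_left HH_def intro!: sum.cong)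
  also have "\<dots> = (\<Sum>i\<in>{..N}. (\<Sum>a\<in>{x. x\<in>HH N \<and> N-x \<le> i \<and> i \<le> x}. e a * X i))"
    by (rule sum.swap_restrict) auto
  also have "\<dots> = (\<Sum>i\<le>N. X i * (\<Sum>a\<in>{max i (N-i)..N}. e a))"
    by (rule sum.cong) (auto simp: sum_distrib_left sum_distrib_right HH_def mult.commute intro!: sum.cong)
  finally show ?thesis .
qed


lemma tele:
  fixes h X :: "nat \<Rightarrow> real"
  assumes sym: "\<forall>i\<le>N. h i = h (N-i)" and z: "h (Suc N) = 0"
  shows "(\<Sum>i\<le>N. h i * X i) = (\<Sum>a\<in>HH N. (h a - h (Suc a)) * (\<Sum>i\<in>{N-a..a}. X i))"
proof -
  have "(\<Sum>a\<in>HH N. (h a - h (Suc a)) * (\<Sum>i\<in>{N-a..a}. X i)) = (\<Sum>i\<le>N. X i * (\<Sum>a\<in>{max i (N-i)..N}. h a - h (Suc a)))"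
    by (rule swapH)
  also have "\<dots> = (\<Sum>i\<le>N. h i * X i)"
  proof (rule sum.cong)
    fix i assume i: "i \<in> {..N}"
    have "(\<Sum>a\<in>{max i (N-i)..N}. h a - h (Suc a)) = - (\<Sum>a\<in>{max i (N-i)..N}. h (Suc a) - h a)"
      by (simp add: sum_negf[symmetric])
    also have "\<dots> = h (max i (N-i))" using i by (subst sum_Suc_diff) (auto simp: z)
    also have "\<dots> = h i"
    proof (cases "i \<le> N - i")
      case True
      hence "max i (N-i) = N - i" by simp
      moreover have "h i = h (N-i)" using sym i by blast
      ultimately show ?thesis by simp
    next
      case False thus ?thesis by simp
    qed
    finally show "X i * (\<Sum>a\<in>{max i (N-i)..N}. h a - h (Suc a)) = h i * X i" by simp
  qed simp
  finally show ?thesis by simp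
qed
lemma indep:
  fixes e :: "nat \<Rightarrow> real"
  assumes "\<forall>x::real. (\<Sum>a\<in>HH N. e a * (\<Sum>i\<in>{N-a..a}. x^i)) = 0"
  shows "\<forall>a\<in>HH N. e a = 0"
proof -
  define c where "c i = (\<Sum>a\<in>{max i (N-i)..N}. e a)" for i
  have "\<forall>x::real. (\<Sum>i\<le>N. c i * x^i) = 0"
    using assms by (simp add: swapH c_def mult.commute)
  hence c0: "\<forall>i\<le>N. c i = 0" using polyfun_eq_0 by blast
  show ?thesis
  proof
    fix a assume a: "a \<in> HH N"
    have m: "max a (N-a) = a" using a by (auto simp: HH_def)
    have ca: "c a = e a + (\<Sum>b\<in>{Suc a..N}. e b)"
      using a unfolding c_def m by (simp add: HH_def sum.atLeast_Suc_atMost)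
    show "e a = 0"
    proof (cases "a = N")
      case True thus ?thesis using ca c0 by simp
    next
      case False
      have m2: "max (Suc a) (N - Suc a) = Suc a" using a by (auto simp: HH_def)
      hence "c (Suc a) = (\<Sum>b\<in>{Suc a..N}. e b)" unfolding c_def by simp
      thus ?thesis using ca c0 a False by (simp add: HH_def)
    qed
  qed
qed


lemma prefix_lemma:
  fixes f :: "nat \<Rightarrow> nat"
  assumes "\<forall>j. Suc j < m \<longrightarrow> f j \<le> f (Suc j)"
  shows "\<exists>c\<le>m. \<forall>j<m. (f j \<le> i \<longleftrightarrow> j < c)"
  using assms
proof (induction m)
  case 0 then show ?case by auto
next
  case (Suc m)
  then obtain c where c: "c \<le> m" "\<forall>j<m. (f j \<le> i \<longleftrightarrow> j < c)" by auto
  show ?case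
  proof (cases "c = m")
    case True
    show ?thesis
    proof (cases "f m \<le> i")
      case True
      thus ?thesis using c \<open>c = m\<close> by (intro exI[of _ "Suc m"]) (auto simp: less_Suc_eq)
    next
      case False
      thus ?thesis using c \<open>c = m\<close> by (intro exI[of _ m]) (auto simp: less_Suc_eq)
    qed
  next
    case False
    hence cm: "c < m" using c by simp
    hence "\<not> f (m - 1) \<le> i" using c by auto
    moreover have "f (m-1) \<le> f m" using Suc.prems cm by (metis Suc_pred' lessI less_nat_zero_code not_gr_zero)
    ultimately have "\<not> f m \<le> i" by simp
    thus ?thesis using c cm by (intro exI[of _ c]) (auto simp: less_Suc_eq)
  qed
qed

definition lev :: "(nat \<times> nat \<Rightarrow> nat) \<Rightarrow> nat \<Rightarrow> nat \<Rightarrow> nat \<Rightarrow> nat" where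
  "lev T m i r = card {j. j < m \<and> T (r, j) \<le> i}"

lemma levprop:
  assumes "\<forall>j. Suc j < m \<longrightarrow> T (r, j) \<le> T (r, Suc j)"
  shows "lev T m i r \<le> m \<and> (\<forall>j<m. (T (r,j) \<le> i \<longleftrightarrow> j < lev T m i r))"
proof -
  obtain c where c: "c \<le> m" "\<forall>j<m. (T (r,j) \<le> i \<longleftrightarrow> j < c)"
    using prefix_lemma[of m "\<lambda>j. T (r,j)" i] assms by auto
  have "{j. j < m \<and> T (r, j) \<le> i} = {..<c}" using c by auto
  hence "lev T m i r = c" by (simp add: lev_def)
  thus ?thesis using c by simp
qed

lemma mem_cells2: "(i,j) \<in> cells [a,b] \<longleftrightarrow> (i = 0 \<and> j < a) \<or> (i = Suc 0 \<and> j < b)"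
  by (auto simp: cells_def less_Suc_eq nth_Cons split: nat.splits)

definition tab2 :: "nat \<Rightarrow> nat \<Rightarrow> nat \<Rightarrow> nat \<times> nat \<Rightarrow> nat" where
  "tab2 a b p = (\<lambda>(r,j). if r = 0 \<and> j < a then (if j < p then 0 else 1) else if r = Suc 0 \<and> j < b then 1 else 0)"

lemma tab2_SSYT: assumes "b \<le> p" "p \<le> a" shows "tab2 a b p \<in> SSYT [a,b] 2"
  using assms unfolding SSYT_def
  by (auto simp: mem_cells2 tab2_def)

lemma SSYT2_tab2:
  assumes T: "T \<in> SSYT [a,b] 2" and ba: "b \<le> a"
  shows "\<exists>p. b \<le> p \<and> p \<le> a \<and> T = tab2 a b p"
proof -
  have lt: "\<And>c. c \<in> cells [a,b] \<Longrightarrow> T c < 2" and out: "\<And>c. c \<notin> cells [a,b] \<Longrightarrow> T c = 0"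
    and row: "\<And>i j. (i, j) \<in> cells [a,b] \<Longrightarrow> (i, Suc j) \<in> cells [a,b] \<Longrightarrow> T (i, j) \<le> T (i, Suc j)"
    and col: "\<And>i j. (i, j) \<in> cells [a,b] \<Longrightarrow> (Suc i, j) \<in> cells [a,b] \<Longrightarrow> T (i, j) < T (Suc i, j)"
    using T unfolding SSYT_def by blast+
  define p where "p = lev T a 0 0"
  have lp: "p \<le> a \<and> (\<forall>j<a. (T (0,j) \<le> 0 \<longleftrightarrow> j < p))"
    unfolding p_def by (rule levprop) (auto intro!: row simp: mem_cells2)
  have r1: "\<And>j. j < b \<Longrightarrow> T (Suc 0, j) = 1 \<and> T (0, j) = 0"
  proof -
    fix j assume "j < b"
    hence "T (0,j) < T (Suc 0, j)" "T (Suc 0, j) < 2" using col[of 0 j] lt[of "(Suc 0, j)"] ba by (auto simp: mem_cells2)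
    thus "T (Suc 0, j) = 1 \<and> T (0, j) = 0" by linarith
  qed
  have bp: "b \<le> p"
  proof (rule ccontr)
    assume "\<not> b \<le> p"
    hence "p < b" by simp
    hence "T (0,p) = 0" "p < a" using r1 ba by auto
    thus False using lp by auto
  qed
  have "T = tab2 a b p"
  proof
    fix c show "T c = tab2 a b p c"
    proof (cases c)
      case (Pair r j)
      show ?thesis
      proof (cases "(r,j) \<in> cells [a,b]")
        case False thus ?thesis using out Pair by (auto simp: tab2_def mem_cells2)
      next
        case True
        hence "T (r,j) < 2" using lt by auto
        thus ?thesis using True Pair r1 lp by (auto simp: tab2_def mem_cells2)
      qed
    qed
  qed
  thus ?thesis using bp lp by auto
qed

lemma tab2_inj: "inj_on (tab2 a b) {b..a}"
proof (rule inj_onI)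
  fix p q assume p: "p \<in> {b..a}" and q: "q \<in> {b..a}" and e: "tab2 a b p = tab2 a b q"
  show "p = q"
  proof (rule ccontr)
    assume "p \<noteq> q"
    then consider "p < q" | "q < p" by linarith
    thus False
    proof cases
      case 1 have "tab2 a b p (0,p) = tab2 a b q (0,p)" using e by simp
      thus False using 1 q by (auto simp: tab2_def)
    next
      case 2 have "tab2 a b p (0,q) = tab2 a b q (0,q)" using e by simp
      thus False using 2 p by (auto simp: tab2_def)
    qed
  qed
qed

lemma cells2_eq: "cells [a,b] = (\<lambda>j. (0,j)) ` {..<a} \<union> (\<lambda>j. (Suc 0,j)) ` {..<b}"
  by (auto simp: mem_cells2[symmetric]) (auto simp: mem_cells2)

lemma tab2_prod:
  assumes "b \<le> p" "p \<le> a"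
  shows "(\<Prod>c\<in>cells [a,b]. [x1,x2::real] ! (tab2 a b p c)) = x1^p * x2^(a+b-p)"
proof -
  have "(\<Prod>c\<in>cells [a,b]. [x1,x2::real] ! (tab2 a b p c)) =
     (\<Prod>c\<in>(\<lambda>j. (0,j)) ` {..<a}. [x1,x2] ! (tab2 a b p c)) * (\<Prod>c\<in>(\<lambda>j. (Suc 0,j)) ` {..<b}. [x1,x2] ! (tab2 a b p c))"
    unfolding cells2_eq by (rule prod.union_disjoint) auto
  also have "\<dots> = (\<Prod>j<a. [x1,x2] ! (tab2 a b p (0,j))) * (\<Prod>j<b. [x1,x2] ! (tab2 a b p (Suc 0,j)))"
    by (simp add: prod.reindex inj_on_def)
  also have "(\<Prod>j<b. [x1,x2] ! (tab2 a b p (Suc 0,j))) = x2^b"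
    by (simp add: tab2_def)
  also have "(\<Prod>j<a. [x1,x2] ! (tab2 a b p (0,j))) = (\<Prod>j\<in>{..<p}. [x1,x2] ! (tab2 a b p (0,j))) * (\<Prod>j\<in>{p..<a}. [x1,x2] ! (tab2 a b p (0,j)))"
    using assms by (metis atLeast0LessThan prod.atLeastLessThan_concat zero_le)
  also have "\<dots> = x1^p * x2^(a-p)"
    using assms by (simp add: tab2_def)
  finally show ?thesis using assms by (simp add: power_add[symmetric])
qed

lemma schur2:
  assumes "b \<le> a"
  shows "schur [a,b] [x1,x2] = (\<Sum>p\<in>{b..a}. x1^p * x2^(a+b-p))"
proof -
  have bij: "bij_betw (tab2 a b) {b..a} (SSYT [a,b] 2)"
    unfolding bij_betw_def using tab2_inj tab2_SSYT SSYT2_tab2[OF _ assms] by fastforce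
  have "schur [a,b] [x1,x2] = (\<Sum>T\<in>SSYT [a,b] 2. \<Prod>c\<in>cells [a,b]. [x1,x2] ! (T c))"
    by (simp add: schur_def numeral_2_eq_2)
  also have "\<dots> = (\<Sum>p\<in>{b..a}. \<Prod>c\<in>cells [a,b]. [x1,x2] ! (tab2 a b p c))"
    by (rule sum.reindex_bij_betw[OF bij, symmetric])
  also have "\<dots> = (\<Sum>p\<in>{b..a}. x1^p * x2^(a+b-p))"
    by (rule sum.cong) (auto simp: tab2_prod)
  finally show ?thesis .
qed



definition seg :: "nat \<Rightarrow> nat \<Rightarrow> nat \<Rightarrow> nat \<Rightarrow> nat" where
  "seg a b c j = (if j < a then 0 else if j < b then 1 else if j < c then 2 else 3)"

type_synonym pat = "nat \<times> nat \<times> nat \<times> nat \<times> nat \<times> nat"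

definition GT :: "nat \<Rightarrow> nat \<Rightarrow> nat \<Rightarrow> nat \<Rightarrow> pat set" where
  "GT L0 L1 L2 L3 = {(p,q0,q1,r0,r1,r2). L1\<le>r0 \<and> r0\<le>L0 \<and> L2\<le>r1 \<and> r1\<le>L1 \<and> L3\<le>r2 \<and> r2\<le>L2
      \<and> r1\<le>q0 \<and> q0\<le>r0 \<and> r2\<le>q1 \<and> q1\<le>r1 \<and> q1\<le>p \<and> p\<le>q0}"

definition tab4 :: "nat \<Rightarrow> nat \<Rightarrow> nat \<Rightarrow> nat \<Rightarrow> pat \<Rightarrow> nat \<times> nat \<Rightarrow> nat" where
  "tab4 L0 L1 L2 L3 P = (case P of (p,q0,q1,r0,r1,r2) \<Rightarrow> (\<lambda>(r,j).
     if r = 0 \<and> j < L0 then seg p q0 r0 j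
     else if r = 1 \<and> j < L1 then seg 0 q1 r1 j
     else if r = 2 \<and> j < L2 then seg 0 0 r2 j
     else if r = 3 \<and> j < L3 then 3 else 0))"

definition pat_of :: "nat \<Rightarrow> nat \<Rightarrow> nat \<Rightarrow> (nat \<times> nat \<Rightarrow> nat) \<Rightarrow> pat" where
  "pat_of L0 L1 L2 T = (lev T L0 0 0, lev T L0 1 0, lev T L1 1 1, lev T L0 2 0, lev T L1 2 1, lev T L2 2 2)"

lemma mem_cells4: "(i,j) \<in> cells [L0,L1,L2,L3] \<longleftrightarrow>
   (i = 0 \<and> j < L0) \<or> (i = 1 \<and> j < L1) \<or> (i = 2 \<and> j < L2) \<or> (i = 3 \<and> j < L3)"
  by (auto simp: cells_def less_Suc_eq nth_Cons numeral_eq_Suc split: nat.splits)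

lemma tab4_SSYT:
  assumes "P \<in> GT L0 L1 L2 L3" "L3 \<le> L2" "L2 \<le> L1" "L1 \<le> L0"
  shows "tab4 L0 L1 L2 L3 P \<in> SSYT [L0,L1,L2,L3] 4"
  using assms unfolding SSYT_def GT_def
  by (auto simp: mem_cells4 tab4_def seg_def split: prod.splits)

lemma lev_seg:
  assumes "x \<le> m" "\<forall>j<m. (f j \<le> i \<longleftrightarrow> j < x)"
  shows "card {j. j < m \<and> f j \<le> i} = x"
proof -
  have "{j. j < m \<and> f j \<le> i} = {..<x}" using assms by auto
  thus ?thesis by simp
qed

lemma pat_tab4:
  assumes "P \<in> GT L0 L1 L2 L3"
  shows "pat_of L0 L1 L2 (tab4 L0 L1 L2 L3 P) = P"
proof -
  obtain p q0 q1 r0 r1 r2 where P: "P = (p,q0,q1,r0,r1,r2)" by (cases P) auto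
  have c: "L1\<le>r0" "r0\<le>L0" "L2\<le>r1" "r1\<le>L1" "L3\<le>r2" "r2\<le>L2"
      "r1\<le>q0" "q0\<le>r0" "r2\<le>q1" "q1\<le>r1" "q1\<le>p" "p\<le>q0" using assms by (auto simp: GT_def P)
  let ?T = "tab4 L0 L1 L2 L3 P"
  have "lev ?T L0 0 0 = p" unfolding lev_def by (rule lev_seg) (use c in \<open>auto simp: P tab4_def seg_def\<close>)
  moreover have "lev ?T L0 1 0 = q0" unfolding lev_def by (rule lev_seg) (use c in \<open>auto simp: P tab4_def seg_def\<close>)
  moreover have "lev ?T L1 1 1 = q1" unfolding lev_def by (rule lev_seg) (use c in \<open>auto simp: P tab4_def seg_def\<close>)
  moreover have "lev ?T L0 2 0 = r0" unfolding lev_def by (rule lev_seg) (use c in \<open>auto simp: P tab4_def seg_def\<close>)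
  moreover have "lev ?T L1 2 1 = r1" unfolding lev_def by (rule lev_seg) (use c in \<open>auto simp: P tab4_def seg_def\<close>)
  moreover have "lev ?T L2 2 2 = r2" unfolding lev_def by (rule lev_seg) (use c in \<open>auto simp: P tab4_def seg_def\<close>)
  ultimately show ?thesis by (simp add: pat_of_def P)
qed

lemma le_of_all: "(\<And>j. j < m \<Longrightarrow> j < c) \<Longrightarrow> m \<le> (c::nat)"
  using not_less by blast

lemma SSYT_pat:
  assumes T: "T \<in> SSYT [L0,L1,L2,L3] 4" and L: "L3 \<le> L2" "L2 \<le> L1" "L1 \<le> L0"
  shows "pat_of L0 L1 L2 T \<in> GT L0 L1 L2 L3 \<and> tab4 L0 L1 L2 L3 (pat_of L0 L1 L2 T) = T"
proof -
  let ?C = "cells [L0,L1,L2,L3]"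
  have lt: "\<And>c. c \<in> ?C \<Longrightarrow> T c < 4" and out: "\<And>c. c \<notin> ?C \<Longrightarrow> T c = 0"
    and row: "\<And>i j. (i, j) \<in> ?C \<Longrightarrow> (i, Suc j) \<in> ?C \<Longrightarrow> T (i, j) \<le> T (i, Suc j)"
    and col: "\<And>i j. (i, j) \<in> ?C \<Longrightarrow> (Suc i, j) \<in> ?C \<Longrightarrow> T (i, j) < T (Suc i, j)"
    using T unfolding SSYT_def by blast+
  have rw0: "\<forall>j. Suc j < L0 \<longrightarrow> T (0, j) \<le> T (0, Suc j)" by (auto intro!: row simp: mem_cells4)
  have rw1: "\<forall>j. Suc j < L1 \<longrightarrow> T (1, j) \<le> T (1, Suc j)" by (auto intro!: row simp: mem_cells4)
  have rw2: "\<forall>j. Suc j < L2 \<longrightarrow> T (2, j) \<le> T (2, Suc j)" by (auto intro!: row simp: mem_cells4)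
  define p where "p = lev T L0 0 0"
  define q0 where "q0 = lev T L0 1 0"
  define q1 where "q1 = lev T L1 1 1"
  define r0 where "r0 = lev T L0 2 0"
  define r1 where "r1 = lev T L1 2 1"
  define r2 where "r2 = lev T L2 2 2"
  have hp: "p \<le> L0 \<and> (\<forall>j<L0. (T (0,j) \<le> 0 \<longleftrightarrow> j < p))" unfolding p_def by (rule levprop[OF rw0])
  have hq0: "q0 \<le> L0 \<and> (\<forall>j<L0. (T (0,j) \<le> 1 \<longleftrightarrow> j < q0))" unfolding q0_def by (rule levprop[OF rw0])
  have hr0: "r0 \<le> L0 \<and> (\<forall>j<L0. (T (0,j) \<le> 2 \<longleftrightarrow> j < r0))" unfolding r0_def by (rule levprop[OF rw0])
  have hq1: "q1 \<le> L1 \<and> (\<forall>j<L1. (T (1,j) \<le> 1 \<longleftrightarrow> j < q1))" unfolding q1_def by (rule levprop[OF rw1])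
  have hr1: "r1 \<le> L1 \<and> (\<forall>j<L1. (T (1,j) \<le> 2 \<longleftrightarrow> j < r1))" unfolding r1_def by (rule levprop[OF rw1])
  have hr2: "r2 \<le> L2 \<and> (\<forall>j<L2. (T (2,j) \<le> 2 \<longleftrightarrow> j < r2))" unfolding r2_def by (rule levprop[OF rw2])
  have c01: "\<And>j. j < L1 \<Longrightarrow> T (0,j) < T (1,j)" using col[of 0] L by (auto simp: mem_cells4)
  have c12: "\<And>j. j < L2 \<Longrightarrow> T (1,j) < T (2,j)" using col[of 1] L by (auto simp: mem_cells4 eval_nat_numeral)
  have c23: "\<And>j. j < L3 \<Longrightarrow> T (2,j) < T (3,j)" using col[of 2] L by (auto simp: mem_cells4 eval_nat_numeral)
  have l0: "\<And>j. j < L0 \<Longrightarrow> T (0,j) < 4" by (intro lt) (auto simp: mem_cells4)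
  have l1: "\<And>j. j < L1 \<Longrightarrow> T (1,j) < 4" by (intro lt) (auto simp: mem_cells4)
  have l2: "\<And>j. j < L2 \<Longrightarrow> T (2,j) < 4" by (intro lt) (auto simp: mem_cells4)
  have l3: "\<And>j. j < L3 \<Longrightarrow> T (3,j) < 4" by (intro lt) (auto simp: mem_cells4)
  have g1: "\<And>j. j < L1 \<Longrightarrow> 1 \<le> T (1,j)" using c01 by fastforce
  have g2: "\<And>j. j < L2 \<Longrightarrow> 2 \<le> T (2,j)"
  proof - fix j assume "j < L2" thus "2 \<le> T (2,j)" using c12[of j] g1[of j] L by linarith qed
  have g3: "\<And>j. j < L3 \<Longrightarrow> T (3,j) = 3"
  proof - fix j assume "j < L3" thus "T (3,j) = 3" using c23[of j] g2[of j] l3[of j] L by linarith qed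
  have jL: "\<And>j. j < L3 \<Longrightarrow> j < L2" "\<And>j. j < L2 \<Longrightarrow> j < L1" "\<And>j. j < L1 \<Longrightarrow> j < L0"
    using L by auto
  have hr0': "\<And>j. j<L0 \<Longrightarrow> (T (0,j) \<le> 2 \<longleftrightarrow> j < r0)" using hr0 by blast
  have hq0': "\<And>j. j<L0 \<Longrightarrow> (T (0,j) \<le> 1 \<longleftrightarrow> j < q0)" using hq0 by blast
  have hp': "\<And>j. j<L0 \<Longrightarrow> (T (0,j) \<le> 0 \<longleftrightarrow> j < p)" using hp by blast
  have hq1': "\<And>j. j<L1 \<Longrightarrow> (T (1,j) \<le> 1 \<longleftrightarrow> j < q1)" using hq1 by blast
  have hr1': "\<And>j. j<L1 \<Longrightarrow> (T (1,j) \<le> 2 \<longleftrightarrow> j < r1)" using hr1 by blast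
  have hr2': "\<And>j. j<L2 \<Longrightarrow> (T (2,j) \<le> 2 \<longleftrightarrow> j < r2)" using hr2 by blast
  have "L1 \<le> r0" proof (rule le_of_all) fix j assume j: "j < L1" thus "j < r0" using c01[OF j] l1[OF j] hr0'[OF jL(3)[OF j]] by auto qed
  moreover have "L2 \<le> r1" proof (rule le_of_all) fix j assume j: "j < L2" thus "j < r1" using c12[OF j] l2[OF j] hr1'[OF jL(2)[OF j]] by auto qed
  moreover have "L3 \<le> r2" proof (rule le_of_all) fix j assume j: "j < L3" thus "j < r2" using c23[OF j] l3[OF j] hr2'[OF jL(1)[OF j]] by auto qed
  moreover have "r1 \<le> q0" proof (rule le_of_all) fix j assume j: "j < r1"
    hence j1: "j < L1" using hr1 by auto
    thus "j < q0" using c01[OF j1] hr1'[OF j1] hq0'[OF jL(3)[OF j1]] j by auto qed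
  moreover have "q0 \<le> r0" proof (rule le_of_all) fix j assume j: "j < q0"
    hence j1: "j < L0" using hq0 by auto
    thus "j < r0" using hq0'[OF j1] hr0'[OF j1] j by auto qed
  moreover have "r2 \<le> q1" proof (rule le_of_all) fix j assume j: "j < r2"
    hence j1: "j < L2" using hr2 by auto
    thus "j < q1" using c12[OF j1] hr2'[OF j1] hq1'[OF jL(2)[OF j1]] j by auto qed
  moreover have "q1 \<le> r1" proof (rule le_of_all) fix j assume j: "j < q1"
    hence j1: "j < L1" using hq1 by auto
    thus "j < r1" using hq1'[OF j1] hr1'[OF j1] j by auto qed
  moreover have "q1 \<le> p" proof (rule le_of_all) fix j assume j: "j < q1"
    hence j1: "j < L1" using hq1 by auto
    thus "j < p" using c01[OF j1] hq1'[OF j1] hp'[OF jL(3)[OF j1]] j by auto qed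
  moreover have "p \<le> q0" proof (rule le_of_all) fix j assume j: "j < p"
    hence j1: "j < L0" using hp by auto
    thus "j < q0" using hq0'[OF j1] hp'[OF j1] j by auto qed
  ultimately have inGT: "(p,q0,q1,r0,r1,r2) \<in> GT L0 L1 L2 L3" using hr0 hr1 hr2 by (auto simp: GT_def)
  have "tab4 L0 L1 L2 L3 (p,q0,q1,r0,r1,r2) = T"
  proof
    fix c show "tab4 L0 L1 L2 L3 (p,q0,q1,r0,r1,r2) c = T c"
    proof (cases c)
      case (Pair r j)
      show ?thesis
      proof (cases "(r,j) \<in> ?C")
        case False thus ?thesis using out Pair by (auto simp: tab4_def mem_cells4)
      next
        case True
        then consider "r = 0" "j < L0" | "r = 1" "j < L1" | "r = 2" "j < L2" | "r = 3" "j < L3"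
          by (auto simp: mem_cells4)
        thus ?thesis
        proof cases
          case 1 thus ?thesis using Pair hp'[of j] hq0'[of j] hr0'[of j] l0[of j] by (auto simp: tab4_def seg_def)
        next
          case 2 thus ?thesis using Pair hq1'[of j] hr1'[of j] l1[of j] g1[of j] L by (auto simp: tab4_def seg_def)
        next
          case 3 thus ?thesis using Pair hr2'[of j] l2[of j] g2[of j] L by (auto simp: tab4_def seg_def)
        next
          case 4 thus ?thesis using Pair g3[of j] L by (auto simp: tab4_def seg_def)
        qed
      qed
    qed
  qed
  thus ?thesis using inGT by (simp add: pat_of_def p_def q0_def q1_def r0_def r1_def r2_def)
qed



lemma cells_Sigma: "cells l = (SIGMA r:{..<length l}. {..<l!r})"
  by (auto simp: cells_def)

lemma row_prod:
  fixes z :: "real list"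
  assumes "a \<le> b" "b \<le> c" "c \<le> m"
  shows "(\<Prod>j<m. z ! seg a b c j) = z!0^a * z!1^(b-a) * z!2^(c-b) * z!3^(m-c)"
proof -
  have "(\<Prod>j<m. z ! seg a b c j) = (\<Prod>j\<in>{0..<m}. z ! seg a b c j)" by (simp add: atLeast0LessThan)
  also have "\<dots> = (\<Prod>j\<in>{0..<a}. z ! seg a b c j) * (\<Prod>j\<in>{a..<m}. z ! seg a b c j)"
    using assms by (simp add: prod.atLeastLessThan_concat)
  also have "(\<Prod>j\<in>{a..<m}. z ! seg a b c j) = (\<Prod>j\<in>{a..<b}. z ! seg a b c j) * (\<Prod>j\<in>{b..<m}. z ! seg a b c j)"
    using assms by (simp add: prod.atLeastLessThan_concat)
  also have "(\<Prod>j\<in>{b..<m}. z ! seg a b c j) = (\<Prod>j\<in>{b..<c}. z ! seg a b c j) * (\<Prod>j\<in>{c..<m}. z ! seg a b c j)"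
    using assms by (simp add: prod.atLeastLessThan_concat)
  also have "(\<Prod>j\<in>{0..<a}. z ! seg a b c j) = z!0^a" by (simp add: seg_def)
  also have "(\<Prod>j\<in>{a..<b}. z ! seg a b c j) = z!1^(b-a)" by (simp add: seg_def)
  also have "(\<Prod>j\<in>{b..<c}. z ! seg a b c j) = z!2^(c-b)" using assms by (simp add: seg_def)
  also have "(\<Prod>j\<in>{c..<m}. z ! seg a b c j) = z!3^(m-c)" using assms by (simp add: seg_def)
  finally show ?thesis by (simp add: mult.assoc)
qed

lemma tab4_prod:
  fixes z0 z1 z2 z3 :: real
  assumes "(p,q0,q1,r0,r1,r2) \<in> GT L0 L1 L2 L3"
  shows "(\<Prod>c\<in>cells [L0,L1,L2,L3]. [z0,z1,z2,z3] ! (tab4 L0 L1 L2 L3 (p,q0,q1,r0,r1,r2) c))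
       = z0^p * z1^(q0-p+q1) * z2^(r0-q0+r1-q1+r2) * z3^(L0-r0+L1-r1+L2-r2+L3)"
proof -
  have c: "L1\<le>r0" "r0\<le>L0" "L2\<le>r1" "r1\<le>L1" "L3\<le>r2" "r2\<le>L2"
      "r1\<le>q0" "q0\<le>r0" "r2\<le>q1" "q1\<le>r1" "q1\<le>p" "p\<le>q0" using assms by (auto simp: GT_def)
  let ?z = "[z0,z1,z2,z3]"
  let ?T = "tab4 L0 L1 L2 L3 (p,q0,q1,r0,r1,r2)"
  have "(\<Prod>c\<in>cells [L0,L1,L2,L3]. ?z ! (?T c)) = (\<Prod>r<4. \<Prod>j<[L0,L1,L2,L3]!r. ?z ! (?T (r,j)))"
    unfolding cells_Sigma by (subst prod.Sigma) (auto simp: eval_nat_numeral)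
  also have "\<dots> = (\<Prod>j<L0. ?z ! (?T (0,j))) * (\<Prod>j<L1. ?z ! (?T (1,j))) * (\<Prod>j<L2. ?z ! (?T (2,j))) * (\<Prod>j<L3. ?z ! (?T (3,j)))"
    by (simp add: eval_nat_numeral prod.lessThan_Suc)
  also have "(\<Prod>j<L0. ?z ! (?T (0,j))) = (\<Prod>j<L0. ?z ! seg p q0 r0 j)"
    by (rule prod.cong) (auto simp: tab4_def)
  also have "(\<Prod>j<L1. ?z ! (?T (1,j))) = (\<Prod>j<L1. ?z ! seg 0 q1 r1 j)"
    by (rule prod.cong) (auto simp: tab4_def)
  also have "(\<Prod>j<L2. ?z ! (?T (2,j))) = (\<Prod>j<L2. ?z ! seg 0 0 r2 j)"
    by (rule prod.cong) (auto simp: tab4_def)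
  also have "(\<Prod>j<L3. ?z ! (?T (3,j))) = (\<Prod>j<L3. ?z ! seg 0 0 0 j)"
    by (rule prod.cong) (auto simp: tab4_def seg_def)
  also have "(\<Prod>j<L0. ?z ! seg p q0 r0 j) = z0^p * z1^(q0-p) * z2^(r0-q0) * z3^(L0-r0)"
    using c by (subst row_prod) auto
  also have "(\<Prod>j<L1. ?z ! seg 0 q1 r1 j) = z1^q1 * z2^(r1-q1) * z3^(L1-r1)"
    using c by (subst row_prod) auto
  also have "(\<Prod>j<L2. ?z ! seg 0 0 r2 j) = z2^r2 * z3^(L2-r2)"
    using c by (subst row_prod) auto
  also have "(\<Prod>j<L3. ?z ! seg 0 0 0 j) = z3^L3"
    by (subst row_prod) auto
  finally have e: "(\<Prod>c\<in>cells [L0,L1,L2,L3]. ?z ! (?T c)) =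
     z0^p * z1^(q0-p) * z2^(r0-q0) * z3^(L0-r0) * (z1^q1 * z2^(r1-q1) * z3^(L1-r1)) * (z2^r2 * z3^(L2-r2)) * z3^L3" .
  have e1: "z1^(q0-p+q1) = z1^(q0-p) * z1^q1" by (simp only: power_add)
  have a2: "r0-q0+r1-q1+r2 = (r0-q0)+(r1-q1)+r2" using c by linarith
  have a3: "L0-r0+L1-r1+L2-r2+L3 = (L0-r0)+(L1-r1)+(L2-r2)+L3" using c by linarith
  have e2: "z2^(r0-q0+r1-q1+r2) = z2^(r0-q0) * z2^(r1-q1) * z2^r2" unfolding a2 by (simp only: power_add)
  have e3: "z3^(L0-r0+L1-r1+L2-r2+L3) = z3^(L0-r0) * z3^(L1-r1) * z3^(L2-r2) * z3^L3" unfolding a3 by (simp only: power_add)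
  show ?thesis unfolding e e1 e2 e3 by (simp add: ac_simps)
qed

definition wt :: "nat \<Rightarrow> nat \<Rightarrow> nat \<Rightarrow> nat \<Rightarrow> pat \<Rightarrow> real \<Rightarrow> real \<Rightarrow> real \<Rightarrow> real \<Rightarrow> real" where
  "wt L0 L1 L2 L3 P z0 z1 z2 z3 = (case P of (p,q0,q1,r0,r1,r2) \<Rightarrow>
      z0^p * z1^(q0-p+q1) * z2^(r0-q0+r1-q1+r2) * z3^(L0-r0+L1-r1+L2-r2+L3))"

lemma schur4:
  assumes L: "L3 \<le> L2" "L2 \<le> L1" "L1 \<le> L0"
  shows "schur [L0,L1,L2,L3] [z0,z1,z2,z3] = (\<Sum>P\<in>GT L0 L1 L2 L3. wt L0 L1 L2 L3 P z0 z1 z2 z3)"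
proof -
  have bij: "bij_betw (tab4 L0 L1 L2 L3) (GT L0 L1 L2 L3) (SSYT [L0,L1,L2,L3] 4)"
  proof (rule bij_betw_byWitness[where f' = "pat_of L0 L1 L2"])
    show "\<forall>a\<in>GT L0 L1 L2 L3. pat_of L0 L1 L2 (tab4 L0 L1 L2 L3 a) = a" using pat_tab4 by blast
    show "\<forall>a'\<in>SSYT [L0, L1, L2, L3] 4. tab4 L0 L1 L2 L3 (pat_of L0 L1 L2 a') = a'" using SSYT_pat L by blast
    show "tab4 L0 L1 L2 L3 ` GT L0 L1 L2 L3 \<subseteq> SSYT [L0, L1, L2, L3] 4" using tab4_SSYT L by blast
    show "pat_of L0 L1 L2 ` SSYT [L0, L1, L2, L3] 4 \<subseteq> GT L0 L1 L2 L3" using SSYT_pat L by blast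
  qed
  have "schur [L0,L1,L2,L3] [z0,z1,z2,z3] = (\<Sum>T\<in>SSYT [L0,L1,L2,L3] 4. \<Prod>c\<in>cells [L0,L1,L2,L3]. [z0,z1,z2,z3] ! (T c))"
    by (simp add: schur_def eval_nat_numeral)
  also have "\<dots> = (\<Sum>P\<in>GT L0 L1 L2 L3. \<Prod>c\<in>cells [L0,L1,L2,L3]. [z0,z1,z2,z3] ! (tab4 L0 L1 L2 L3 P c))"
    by (rule sum.reindex_bij_betw[OF bij, symmetric])
  also have "\<dots> = (\<Sum>P\<in>GT L0 L1 L2 L3. wt L0 L1 L2 L3 P z0 z1 z2 z3)"
    by (rule sum.cong) (auto simp: wt_def tab4_prod)
  finally show ?thesis .
qed



definition bk0 :: "pat \<Rightarrow> pat" where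
  "bk0 P = (case P of (p,q0,q1,r0,r1,r2) \<Rightarrow> (q0+q1-p, q0,q1,r0,r1,r2))"
definition bk1 :: "pat \<Rightarrow> pat" where
  "bk1 P = (case P of (p,q0,q1,r0,r1,r2) \<Rightarrow> (p, max r1 p + r0 - q0, r2 + min r1 p - q1, r0,r1,r2))"
definition bk2 :: "nat \<Rightarrow> nat \<Rightarrow> nat \<Rightarrow> nat \<Rightarrow> pat \<Rightarrow> pat" where
  "bk2 L0 L1 L2 L3 P = (case P of (p,q0,q1,r0,r1,r2) \<Rightarrow>
     (p,q0,q1, max L1 q0 + L0 - r0, max L2 q1 + min L1 q0 - r1, L3 + min L2 q1 - r2))"

definition w0 :: "pat \<Rightarrow> int" where "w0 P = (case P of (p,q0,q1,r0,r1,r2) \<Rightarrow> int p)"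
definition w1 :: "pat \<Rightarrow> int" where "w1 P = (case P of (p,q0,q1,r0,r1,r2) \<Rightarrow> int q0 + int q1 - int p)"
definition w2 :: "pat \<Rightarrow> int" where "w2 P = (case P of (p,q0,q1,r0,r1,r2) \<Rightarrow> int r0 + int r1 + int r2 - int q0 - int q1)"
definition w3 :: "int \<Rightarrow> pat \<Rightarrow> int" where "w3 N P = (case P of (p,q0,q1,r0,r1,r2) \<Rightarrow> N - int r0 - int r1 - int r2)"

lemma bk0_GT: "P \<in> GT L0 L1 L2 L3 \<Longrightarrow> bk0 P \<in> GT L0 L1 L2 L3 \<and> bk0 (bk0 P) = P
   \<and> w0 (bk0 P) = w1 P \<and> w1 (bk0 P) = w0 P \<and> w2 (bk0 P) = w2 P \<and> w3 N (bk0 P) = w3 N P"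
  by (cases P) (auto simp: GT_def bk0_def w0_def w1_def w2_def w3_def)

lemma bk1_GT: "P \<in> GT L0 L1 L2 L3 \<Longrightarrow> bk1 P \<in> GT L0 L1 L2 L3 \<and> bk1 (bk1 P) = P
   \<and> w0 (bk1 P) = w0 P \<and> w1 (bk1 P) = w2 P \<and> w2 (bk1 P) = w1 P \<and> w3 N (bk1 P) = w3 N P"
  by (cases P) (auto simp: GT_def bk1_def w0_def w1_def w2_def w3_def max_def min_def)

lemma bk2_GT: "P \<in> GT L0 L1 L2 L3 \<Longrightarrow> bk2 L0 L1 L2 L3 P \<in> GT L0 L1 L2 L3 \<and> bk2 L0 L1 L2 L3 (bk2 L0 L1 L2 L3 P) = P
   \<and> w0 (bk2 L0 L1 L2 L3 P) = w0 P \<and> w1 (bk2 L0 L1 L2 L3 P) = w1 P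
   \<and> w2 (bk2 L0 L1 L2 L3 P) = w3 (int (L0+L1+L2+L3)) P \<and> w3 (int (L0+L1+L2+L3)) (bk2 L0 L1 L2 L3 P) = w2 P"
  by (cases P) (auto simp: GT_def bk2_def w0_def w1_def w2_def w3_def max_def min_def)



definition KK :: "nat \<Rightarrow> nat \<Rightarrow> nat \<Rightarrow> nat \<Rightarrow> int \<Rightarrow> int \<Rightarrow> nat" where
  "KK L0 L1 L2 L3 a c = card {P\<in>GT L0 L1 L2 L3. w0 P + w1 P = a \<and> w0 P + w2 P = c}"

lemma wsum: "w0 P + w1 P + w2 P + w3 N P = N"
  by (cases P) (simp add: w0_def w1_def w2_def w3_def)

lemma bk02: "bk0 (bk2 L0 L1 L2 L3 P) = bk2 L0 L1 L2 L3 (bk0 P)"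
  by (cases P) (simp add: bk0_def bk2_def)

lemma KK_symA: "KK L0 L1 L2 L3 a c = KK L0 L1 L2 L3 (int (L0+L1+L2+L3) - a) c"
proof -
  let ?N = "int (L0+L1+L2+L3)"
  let ?G = "GT L0 L1 L2 L3"
  define F where "F = bk1 \<circ> bk2 L0 L1 L2 L3 \<circ> bk0 \<circ> bk1"
  have F: "F P \<in> ?G \<and> F (F P) = P \<and> w0 (F P) = w2 P \<and> w1 (F P) = w3 ?N P \<and> w2 (F P) = w0 P"
    if "P \<in> ?G" for P
  proof -
    note h1 = bk1_GT[OF that, of ?N]
    note h2 = bk0_GT[OF h1[THEN conjunct1], of ?N]
    note h3 = bk2_GT[OF h2[THEN conjunct1]]
    note h4 = bk1_GT[OF h3[THEN conjunct1], of ?N]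
    have inv: "F (F P) = P"
    proof -
      have "F (F P) = bk1 (bk2 L0 L1 L2 L3 (bk0 (bk1 (bk1 (bk2 L0 L1 L2 L3 (bk0 (bk1 P)))))))"
        by (simp add: F_def)
      also have "bk1 (bk1 (bk2 L0 L1 L2 L3 (bk0 (bk1 P)))) = bk2 L0 L1 L2 L3 (bk0 (bk1 P))"
        using h3 h4 by simp
      also have "bk0 (bk2 L0 L1 L2 L3 (bk0 (bk1 P))) = bk2 L0 L1 L2 L3 (bk0 (bk0 (bk1 P)))" by (rule bk02)
      also have "bk0 (bk0 (bk1 P)) = bk1 P" using h2 by simp
      also have "bk2 L0 L1 L2 L3 (bk2 L0 L1 L2 L3 (bk1 P)) = bk1 P" using bk2_GT[OF h1[THEN conjunct1]] by simp
      also have "bk1 (bk1 P) = P" using h1 by simp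
      finally show ?thesis .
    qed
    show ?thesis using h1 h2 h3 h4 inv by (simp add: F_def)
  qed
  have "bij_betw F {P\<in>?G. w0 P + w1 P = a \<and> w0 P + w2 P = c} {P\<in>?G. w0 P + w1 P = ?N - a \<and> w0 P + w2 P = c}"
  proof (rule bij_betw_byWitness[where f' = F])
    have ws: "\<And>P. w0 P + w1 P + w2 P + w3 ?N P = ?N" by (rule wsum)
    show "\<forall>x\<in>{P\<in>?G. w0 P + w1 P = a \<and> w0 P + w2 P = c}. F (F x) = x" using F by blast
    show "\<forall>x\<in>{P\<in>?G. w0 P + w1 P = ?N - a \<and> w0 P + w2 P = c}. F (F x) = x" using F by blast
    show "F ` {P\<in>?G. w0 P + w1 P = a \<and> w0 P + w2 P = c} \<subseteq> {P\<in>?G. w0 P + w1 P = ?N - a \<and> w0 P + w2 P = c}"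
    proof
      fix Q assume "Q \<in> F ` {P\<in>?G. w0 P + w1 P = a \<and> w0 P + w2 P = c}"
      then obtain P where P: "P\<in>?G" "w0 P + w1 P = a \<and> w0 P + w2 P = c" "Q = F P" by auto
      show "Q \<in> {P\<in>?G. w0 P + w1 P = ?N - a \<and> w0 P + w2 P = c}" using F[OF P(1)] ws[of P] P by (simp add: algebra_simps)
    qed
    show "F ` {P\<in>?G. w0 P + w1 P = ?N - a \<and> w0 P + w2 P = c} \<subseteq> {P\<in>?G. w0 P + w1 P = a \<and> w0 P + w2 P = c}"
    proof
      fix Q assume "Q \<in> F ` {P\<in>?G. w0 P + w1 P = ?N - a \<and> w0 P + w2 P = c}"
      then obtain P where P: "P\<in>?G" "w0 P + w1 P = ?N - a \<and> w0 P + w2 P = c" "Q = F P" by auto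
      show "Q \<in> {P\<in>?G. w0 P + w1 P = a \<and> w0 P + w2 P = c}" using F[OF P(1)] ws[of P] P by (simp add: algebra_simps)
    qed
  qed
  thus ?thesis unfolding KK_def by (rule bij_betw_same_card)
qed

lemma KK_symC: "KK L0 L1 L2 L3 a c = KK L0 L1 L2 L3 a (int (L0+L1+L2+L3) - c)"
proof -
  let ?N = "int (L0+L1+L2+L3)"
  let ?G = "GT L0 L1 L2 L3"
  define F where "F = bk0 \<circ> bk2 L0 L1 L2 L3"
  have F: "F P \<in> ?G \<and> F (F P) = P \<and> w0 (F P) = w1 P \<and> w1 (F P) = w0 P \<and> w2 (F P) = w3 ?N P"
    if "P \<in> ?G" for P
  proof -
    note h1 = bk2_GT[OF that]
    note h2 = bk0_GT[OF h1[THEN conjunct1], of ?N]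
    have inv: "F (F P) = P"
    proof -
      have "F (F P) = bk0 (bk2 L0 L1 L2 L3 (bk0 (bk2 L0 L1 L2 L3 P)))" by (simp add: F_def)
      also have "\<dots> = bk0 (bk0 (bk2 L0 L1 L2 L3 (bk2 L0 L1 L2 L3 P)))" by (simp add: bk02)
      also have "\<dots> = P" using h1 bk0_GT[OF that] by simp
      finally show ?thesis .
    qed
    show ?thesis using h1 h2 inv by (simp add: F_def)
  qed
  have "bij_betw F {P\<in>?G. w0 P + w1 P = a \<and> w0 P + w2 P = c} {P\<in>?G. w0 P + w1 P = a \<and> w0 P + w2 P = ?N - c}"
  proof (rule bij_betw_byWitness[where f' = F])
    have ws: "\<And>P. w0 P + w1 P + w2 P + w3 ?N P = ?N" by (rule wsum)
    show "\<forall>x\<in>{P\<in>?G. w0 P + w1 P = a \<and> w0 P + w2 P = c}. F (F x) = x" using F by blast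
    show "\<forall>x\<in>{P\<in>?G. w0 P + w1 P = a \<and> w0 P + w2 P = ?N - c}. F (F x) = x" using F by blast
    show "F ` {P\<in>?G. w0 P + w1 P = a \<and> w0 P + w2 P = c} \<subseteq> {P\<in>?G. w0 P + w1 P = a \<and> w0 P + w2 P = ?N - c}"
    proof
      fix Q assume "Q \<in> F ` {P\<in>?G. w0 P + w1 P = a \<and> w0 P + w2 P = c}"
      then obtain P where P: "P\<in>?G" "w0 P + w1 P = a \<and> w0 P + w2 P = c" "Q = F P" by auto
      show "Q \<in> {P\<in>?G. w0 P + w1 P = a \<and> w0 P + w2 P = ?N - c}" using F[OF P(1)] ws[of P] P by (simp add: algebra_simps)
    qed
    show "F ` {P\<in>?G. w0 P + w1 P = a \<and> w0 P + w2 P = ?N - c} \<subseteq> {P\<in>?G. w0 P + w1 P = a \<and> w0 P + w2 P = c}"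
    proof
      fix Q assume "Q \<in> F ` {P\<in>?G. w0 P + w1 P = a \<and> w0 P + w2 P = ?N - c}"
      then obtain P where P: "P\<in>?G" "w0 P + w1 P = a \<and> w0 P + w2 P = ?N - c" "Q = F P" by auto
      show "Q \<in> {P\<in>?G. w0 P + w1 P = a \<and> w0 P + w2 P = c}" using F[OF P(1)] ws[of P] P by (simp add: algebra_simps)
    qed
  qed
  thus ?thesis unfolding KK_def by (rule bij_betw_same_card)
qed



context
  fixes L0 L1 L2 L3 :: nat
  assumes L: "L3 \<le> L2" "L2 \<le> L1" "L1 \<le> L0"
begin

abbreviation "NN \<equiv> L0+L1+L2+L3"

lemma GT_w:
  assumes "P \<in> GT L0 L1 L2 L3"
  shows "w0 P \<ge> 0 \<and> w1 P \<ge> 0 \<and> w2 P \<ge> 0 \<and> w3 (int NN) P \<ge> 0"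
  using assms by (cases P) (auto simp: GT_def w0_def w1_def w2_def w3_def)

lemma finite_GT: "finite (GT L0 L1 L2 L3)"
proof -
  have "GT L0 L1 L2 L3 \<subseteq> {..L0} \<times> {..L0} \<times> {..L0} \<times> {..L0} \<times> {..L0} \<times> {..L0}"
    using L by (auto simp: GT_def)
  thus ?thesis by (rule finite_subset) auto
qed

definition An :: "pat \<Rightarrow> nat" where "An P = nat (w0 P + w1 P)"
definition Cn :: "pat \<Rightarrow> nat" where "Cn P = nat (w0 P + w2 P)"

lemma wt_xy:
  assumes "P \<in> GT L0 L1 L2 L3"
  shows "wt L0 L1 L2 L3 P (x1*y1) (x1*y2) (x2*y1) (x2*y2) = x1^(An P) * x2^(NN - An P) * y1^(Cn P) * y2^(NN - Cn P)"
proof -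
  obtain p q0 q1 r0 r1 r2 where P: "P = (p,q0,q1,r0,r1,r2)" by (cases P) auto
  have c: "L1\<le>r0" "r0\<le>L0" "L2\<le>r1" "r1\<le>L1" "L3\<le>r2" "r2\<le>L2"
      "r1\<le>q0" "q0\<le>r0" "r2\<le>q1" "q1\<le>r1" "q1\<le>p" "p\<le>q0" using assms by (auto simp: GT_def P)
  define e0 where "e0 = p"
  define e1 where "e1 = q0-p+q1"
  define e2 where "e2 = r0-q0+r1-q1+r2"
  define e3 where "e3 = L0-r0+L1-r1+L2-r2+L3"
  have "wt L0 L1 L2 L3 P (x1*y1) (x1*y2) (x2*y1) (x2*y2) = (x1*y1)^e0 * (x1*y2)^e1 * (x2*y1)^e2 * (x2*y2)^e3"
    by (simp add: wt_def P e0_def e1_def e2_def e3_def)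
  also have "\<dots> = x1^(e0+e1) * x2^(e2+e3) * y1^(e0+e2) * y2^(e1+e3)"
    unfolding power_mult_distrib power_add by (simp only: ac_simps)
  also have "e0+e1 = An P" using c by (simp add: An_def P w0_def w1_def e0_def e1_def)
  also have "e2+e3 = NN - An P" using c by (simp add: An_def P w0_def w1_def e2_def e3_def)
  also have "e0+e2 = Cn P" using c by (simp add: Cn_def P w0_def w2_def e0_def e2_def)
  also have "e1+e3 = NN - Cn P" using c by (simp add: Cn_def P w0_def w2_def e1_def e3_def)
  finally show ?thesis .
qed

lemma An_Cn_le: "P \<in> GT L0 L1 L2 L3 \<Longrightarrow> An P \<le> NN \<and> Cn P \<le> NN"
  using GT_w[of P] wsum[of P "int NN"] by (simp add: An_def Cn_def nat_le_iff)

lemma card_AC: "card {P\<in>GT L0 L1 L2 L3. An P = a \<and> Cn P = c} = KK L0 L1 L2 L3 (int a) (int c)"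
proof -
  have "{P\<in>GT L0 L1 L2 L3. An P = a \<and> Cn P = c} = {P\<in>GT L0 L1 L2 L3. w0 P + w1 P = int a \<and> w0 P + w2 P = int c}"
    using GT_w by (auto simp: An_def Cn_def)
  thus ?thesis by (simp add: KK_def)
qed

lemma group_sum:
  fixes F :: "nat \<Rightarrow> nat \<Rightarrow> real"
  assumes fin: "finite S" and le: "\<forall>P\<in>S. f P \<le> N \<and> g P \<le> N"
  shows "(\<Sum>P\<in>S. F (f P) (g P)) = (\<Sum>a\<le>N. \<Sum>c\<le>N. real (card {P\<in>S. f P = a \<and> g P = c}) * F a c)"
proof -
  have "(\<Sum>a\<le>N. \<Sum>c\<le>N. real (card {P\<in>S. f P = a \<and> g P = c}) * F a c)
      = (\<Sum>a\<le>N. \<Sum>c\<le>N. \<Sum>P\<in>S. if f P = a \<and> g P = c then F (f P) (g P) else 0)"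
  proof (intro sum.cong refl)
    fix a c
    have "real (card {P\<in>S. f P = a \<and> g P = c}) * F a c = (\<Sum>P\<in>{P\<in>S. f P = a \<and> g P = c}. F (f P) (g P))"
      by simp
    also have "\<dots> = (\<Sum>P\<in>S. if f P = a \<and> g P = c then F (f P) (g P) else 0)"
      using fin by (rule sum.inter_filter)
    finally show "real (card {P\<in>S. f P = a \<and> g P = c}) * F a c = (\<Sum>P\<in>S. if f P = a \<and> g P = c then F (f P) (g P) else 0)" .
  qed
  also have "\<dots> = (\<Sum>a\<le>N. \<Sum>P\<in>S. \<Sum>c\<le>N. if f P = a \<and> g P = c then F (f P) (g P) else 0)"
    by (rule sum.cong[OF refl], rule sum.swap)
  also have "\<dots> = (\<Sum>P\<in>S. \<Sum>a\<le>N. \<Sum>c\<le>N. if f P = a \<and> g P = c then F (f P) (g P) else 0)"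
    by (rule sum.swap)
  also have "\<dots> = (\<Sum>P\<in>S. F (f P) (g P))"
  proof (rule sum.cong[OF refl])
    fix P assume "P \<in> S"
    hence "f P \<le> N" "g P \<le> N" using le by auto
    hence i: "(\<Sum>c\<le>N. if f P = a \<and> g P = c then F (f P) (g P) else 0) = (if f P = a then F (f P) (g P) else 0)" for a
    proof (cases "f P = a")
      case True
      thus ?thesis using \<open>g P \<le> N\<close> by (simp add: sum.delta)
    qed simp
    show "(\<Sum>a\<le>N. \<Sum>c\<le>N. if f P = a \<and> g P = c then F (f P) (g P) else 0) = F (f P) (g P)"
      unfolding i using \<open>f P \<le> N\<close> by (simp add: sum.delta)
  qed
  finally show ?thesis by simp
qed

end


definition S2 :: "nat \<Rightarrow> nat \<Rightarrow> real \<Rightarrow> real \<Rightarrow> real" where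
  "S2 N a x1 x2 = (\<Sum>i\<in>{N-a..a}. x1^i * x2^(N-i))"

context
  fixes L0 L1 L2 L3 :: nat
  assumes L: "L3 \<le> L2" "L2 \<le> L1" "L1 \<le> L0"
begin

abbreviation "NM \<equiv> L0+L1+L2+L3"

definition Kr :: "nat \<Rightarrow> nat \<Rightarrow> real" where "Kr a c = real (KK L0 L1 L2 L3 (int a) (int c))"
definition Gi :: "nat \<Rightarrow> nat \<Rightarrow> int" where
  "Gi a c = int (KK L0 L1 L2 L3 (int a) (int c)) - int (KK L0 L1 L2 L3 (int (Suc a)) (int c))
          - int (KK L0 L1 L2 L3 (int a) (int (Suc c))) + int (KK L0 L1 L2 L3 (int (Suc a)) (int (Suc c)))"

lemma Kr_symA: "a \<le> NM \<Longrightarrow> Kr a c = Kr (NM - a) c"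
  unfolding Kr_def using KK_symA[of L0 L1 L2 L3 "int a" "int c"] by (simp add: of_nat_diff)

lemma Kr_symC: "c \<le> NM \<Longrightarrow> Kr a c = Kr a (NM - c)"
  unfolding Kr_def using KK_symC[of L0 L1 L2 L3 "int a" "int c"] by (simp add: of_nat_diff)

lemma Kr_zeroA: "Kr (Suc NM) c = 0"
proof -
  have e: "{P\<in>GT L0 L1 L2 L3. w0 P + w1 P = int (Suc NM) \<and> w0 P + w2 P = int c} = {}"
  proof (rule ccontr)
    assume "{P\<in>GT L0 L1 L2 L3. w0 P + w1 P = int (Suc NM) \<and> w0 P + w2 P = int c} \<noteq> {}"
    then obtain P where P: "P \<in> GT L0 L1 L2 L3" "w0 P + w1 P = int (Suc NM) \<and> w0 P + w2 P = int c" by blast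
    show False using GT_w[OF L P(1)] wsum[of P "int NM"] P(2) by linarith
  qed
  show ?thesis by (simp only: Kr_def KK_def e card.empty of_nat_0)
qed

lemma Kr_zeroC: "Kr a (Suc NM) = 0"
proof -
  have e: "{P\<in>GT L0 L1 L2 L3. w0 P + w1 P = int a \<and> w0 P + w2 P = int (Suc NM)} = {}"
  proof (rule ccontr)
    assume "{P\<in>GT L0 L1 L2 L3. w0 P + w1 P = int a \<and> w0 P + w2 P = int (Suc NM)} \<noteq> {}"
    then obtain P where P: "P \<in> GT L0 L1 L2 L3" "w0 P + w1 P = int a \<and> w0 P + w2 P = int (Suc NM)" by blast
    show False using GT_w[OF L P(1)] wsum[of P "int NM"] P(2) by linarith
  qed
  show ?thesis by (simp only: Kr_def KK_def e card.empty of_nat_0)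
qed

lemma expansion:
  "schur [L0,L1,L2,L3] [x1*y1, x1*y2, x2*y1, x2*y2] =
     (\<Sum>a\<in>HH NM. \<Sum>c\<in>HH NM. of_int (Gi a c) * S2 NM a x1 x2 * S2 NM c y1 y2)"
proof -
  define X where "X a = x1^a * x2^(NM-a)" for a
  define Y where "Y c = y1^c * y2^(NM-c)" for c
  define D where "D a c = Kr a c - Kr (Suc a) c" for a c
  have "schur [L0,L1,L2,L3] [x1*y1, x1*y2, x2*y1, x2*y2] =
      (\<Sum>P\<in>GT L0 L1 L2 L3. wt L0 L1 L2 L3 P (x1*y1) (x1*y2) (x2*y1) (x2*y2))"
    using L by (rule schur4)
  also have "\<dots> = (\<Sum>P\<in>GT L0 L1 L2 L3. (\<lambda>a c. X a * Y c) (An P) (Cn P))"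
    by (rule sum.cong) (auto simp: wt_xy[OF L] X_def Y_def ac_simps)
  also have "\<dots> = (\<Sum>a\<le>NM. \<Sum>c\<le>NM. real (card {P\<in>GT L0 L1 L2 L3. An P = a \<and> Cn P = c}) * (X a * Y c))"
    by (rule group_sum) (use finite_GT[OF L] An_Cn_le[OF L] in auto)
  also have "\<dots> = (\<Sum>a\<le>NM. \<Sum>c\<le>NM. Y c * (Kr a c * X a))"
    unfolding card_AC[OF L] by (intro sum.cong refl) (simp add: Kr_def)
  also have "\<dots> = (\<Sum>c\<le>NM. Y c * (\<Sum>a\<le>NM. Kr a c * X a))"
    by (subst sum.swap) (simp add: sum_distrib_left)
  also have "\<dots> = (\<Sum>c\<le>NM. Y c * (\<Sum>a\<in>HH NM. D a c * S2 NM a x1 x2))"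
  proof (rule sum.cong[OF refl])
    fix c
    have "(\<Sum>a\<le>NM. Kr a c * X a) = (\<Sum>a\<in>HH NM. (Kr a c - Kr (Suc a) c) * (\<Sum>i\<in>{NM-a..a}. X i))"
    proof (rule tele)
      show "\<forall>i\<le>NM. Kr i c = Kr (NM - i) c" using Kr_symA by blast
      show "Kr (Suc NM) c = 0" by (rule Kr_zeroA)
    qed
    thus "Y c * (\<Sum>a\<le>NM. Kr a c * X a) = Y c * (\<Sum>a\<in>HH NM. D a c * S2 NM a x1 x2)"
      by (simp add: D_def S2_def X_def)
  qed
  also have "\<dots> = (\<Sum>a\<in>HH NM. S2 NM a x1 x2 * (\<Sum>c\<le>NM. D a c * Y c))"
    by (simp add: sum_distrib_left sum_distrib_right ac_simps) (rule sum.swap)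
  also have "\<dots> = (\<Sum>a\<in>HH NM. S2 NM a x1 x2 * (\<Sum>c\<in>HH NM. (D a c - D a (Suc c)) * S2 NM c y1 y2))"
  proof (rule sum.cong[OF refl])
    fix a
    have "(\<Sum>c\<le>NM. D a c * Y c) = (\<Sum>c\<in>HH NM. (D a c - D a (Suc c)) * (\<Sum>i\<in>{NM-c..c}. Y i))"
    proof (rule tele)
      show "\<forall>i\<le>NM. D a i = D a (NM - i)"
      proof (intro allI impI)
        fix i assume i: "i \<le> NM"
        have "Kr a i = Kr a (NM-i)" "Kr (Suc a) i = Kr (Suc a) (NM-i)" using Kr_symC[OF i] by blast+
        thus "D a i = D a (NM - i)" unfolding D_def by linarith
      qed
      show "D a (Suc NM) = 0" by (simp add: D_def Kr_zeroC)
    qed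
    thus "S2 NM a x1 x2 * (\<Sum>c\<le>NM. D a c * Y c) = S2 NM a x1 x2 * (\<Sum>c\<in>HH NM. (D a c - D a (Suc c)) * S2 NM c y1 y2)"
      by (simp add: S2_def Y_def)
  qed
  also have "\<dots> = (\<Sum>a\<in>HH NM. \<Sum>c\<in>HH NM. of_int (Gi a c) * S2 NM a x1 x2 * S2 NM c y1 y2)"
    by (simp add: sum_distrib_left Gi_def D_def Kr_def ac_simps algebra_simps)
  finally show ?thesis .
qed

end


lemma parts2_eq: "parts2 N = (\<lambda>a. [a, N-a]) ` HH N"
  by (auto simp: parts2_def HH_def image_def)

lemma inj_pair: "inj_on (\<lambda>a. [a, N-a]) A"
  by (auto simp: inj_on_def)

lemma schur_pair: "a \<in> HH N \<Longrightarrow> schur [a, N-a] [x1,x2] = S2 N a x1 x2"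
  by (subst schur2) (auto simp: HH_def S2_def)

lemma reindex2:
  fixes E :: "nat list \<Rightarrow> nat list \<Rightarrow> real"
  shows "(\<Sum>(A,B)\<in>parts2 N \<times> parts2 N. E A B * schur A [x1,x2] * schur B [y1,y2]) =
         (\<Sum>a\<in>HH N. \<Sum>c\<in>HH N. E [a,N-a] [c,N-c] * S2 N a x1 x2 * S2 N c y1 y2)"
proof -
  have "(\<Sum>(A,B)\<in>parts2 N \<times> parts2 N. E A B * schur A [x1,x2] * schur B [y1,y2]) =
        (\<Sum>A\<in>parts2 N. \<Sum>B\<in>parts2 N. E A B * schur A [x1,x2] * schur B [y1,y2])"
    by (rule sum.cartesian_product[symmetric])
  also have "\<dots> = (\<Sum>a\<in>HH N. \<Sum>c\<in>HH N. E [a,N-a] [c,N-c] * schur [a,N-a] [x1,x2] * schur [c,N-c] [y1,y2])"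
    unfolding parts2_eq by (simp add: sum.reindex[OF inj_pair])
  also have "\<dots> = (\<Sum>a\<in>HH N. \<Sum>c\<in>HH N. E [a,N-a] [c,N-c] * S2 N a x1 x2 * S2 N c y1 y2)"
    by (intro sum.cong refl) (simp add: schur_pair)
  finally show ?thesis .
qed

lemma S2_one: "S2 N a x 1 = (\<Sum>i\<in>{N-a..a}. x^i)"
  by (simp add: S2_def)

lemma indep2:
  fixes e :: "nat \<Rightarrow> nat \<Rightarrow> real"
  assumes "\<forall>x1 x2 y1 y2. (\<Sum>a\<in>HH N. \<Sum>c\<in>HH N. e a c * S2 N a x1 x2 * S2 N c y1 y2) = 0"
  shows "\<forall>a\<in>HH N. \<forall>c\<in>HH N. e a c = 0"
proof -
  have A: "\<forall>a\<in>HH N. (\<Sum>c\<in>HH N. e a c * S2 N c y 1) = 0" for y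
  proof -
    have "\<forall>x::real. (\<Sum>a\<in>HH N. (\<Sum>c\<in>HH N. e a c * S2 N c y 1) * S2 N a x 1) = 0"
    proof
      fix x :: real
      have "(\<Sum>a\<in>HH N. (\<Sum>c\<in>HH N. e a c * S2 N c y 1) * S2 N a x 1)
          = (\<Sum>a\<in>HH N. \<Sum>c\<in>HH N. e a c * S2 N a x 1 * S2 N c y 1)"
        by (simp only: sum_distrib_right) (intro sum.cong refl; simp only: ac_simps)
      thus "(\<Sum>a\<in>HH N. (\<Sum>c\<in>HH N. e a c * S2 N c y 1) * S2 N a x 1) = 0" using assms by simp
    qed
    hence "\<forall>x::real. (\<Sum>a\<in>HH N. (\<Sum>c\<in>HH N. e a c * S2 N c y 1) * (\<Sum>i\<in>{N-a..a}. x^i)) = 0"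
      unfolding S2_one .
    thus ?thesis by (rule indep)
  qed
  show ?thesis
  proof (intro ballI)
    fix a c assume a: "a \<in> HH N" and c: "c \<in> HH N"
    have "\<forall>y::real. (\<Sum>c\<in>HH N. e a c * (\<Sum>i\<in>{N-c..c}. y^i)) = 0"
      using A a by (simp add: S2_one)
    thus "e a c = 0" using indep c by blast
  qed
qed

definition kpred :: "nat list \<Rightarrow> (nat list \<Rightarrow> nat list \<Rightarrow> int) \<Rightarrow> bool" where
  "kpred la g = ((\<forall>a b. (a, b) \<notin> parts2 (sum_list la) \<times> parts2 (sum_list la) \<longrightarrow> g a b = 0) \<and>
      (\<forall>x1 x2 y1 y2 :: real.
         schur la [x1*y1, x1*y2, x2*y1, x2*y2] =
         (\<Sum>(a, b)\<in>parts2 (sum_list la) \<times> parts2 (sum_list la).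
             of_int (g a b) * schur a [x1, x2] * schur b [y1, y2])))"

lemma kron_kpred: "kron mu nu la = (THE g. kpred la g) mu nu"
  by (simp add: kron_def kpred_def)

context
  fixes L0 L1 L2 L3 :: nat
  assumes L: "L3 \<le> L2" "L2 \<le> L1" "L1 \<le> L0"
begin

abbreviation "NQ \<equiv> L0+L1+L2+L3"

definition gf :: "nat list \<Rightarrow> nat list \<Rightarrow> int" where
  "gf A B = (if (A,B) \<in> parts2 NQ \<times> parts2 NQ then Gi L0 L1 L2 L3 (A!0) (B!0) else 0)"

lemma gf_pair: "a \<in> HH NQ \<Longrightarrow> c \<in> HH NQ \<Longrightarrow> gf [a,NQ-a] [c,NQ-c] = Gi L0 L1 L2 L3 a c"
  by (auto simp: gf_def parts2_eq)

lemma gf_kpred: "kpred [L0,L1,L2,L3] gf"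
  unfolding kpred_def
proof (intro conjI allI impI)
  fix a b assume "(a, b) \<notin> parts2 (sum_list [L0,L1,L2,L3]) \<times> parts2 (sum_list [L0,L1,L2,L3])"
  thus "gf a b = 0" by (auto simp: gf_def add.assoc)
next
  fix x1 x2 y1 y2 :: real
  have "schur [L0,L1,L2,L3] [x1*y1, x1*y2, x2*y1, x2*y2] =
     (\<Sum>a\<in>HH NQ. \<Sum>c\<in>HH NQ. of_int (Gi L0 L1 L2 L3 a c) * S2 NQ a x1 x2 * S2 NQ c y1 y2)"
    by (rule expansion[OF L])
  also have "\<dots> = (\<Sum>a\<in>HH NQ. \<Sum>c\<in>HH NQ. of_int (gf [a,NQ-a] [c,NQ-c]) * S2 NQ a x1 x2 * S2 NQ c y1 y2)"
    by (intro sum.cong refl) (auto simp: gf_pair)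
  also have "\<dots> = (\<Sum>(a, b)\<in>parts2 NQ \<times> parts2 NQ. of_int (gf a b) * schur a [x1, x2] * schur b [y1, y2])"
    by (rule reindex2[symmetric])
  finally show "schur [L0,L1,L2,L3] [x1*y1, x1*y2, x2*y1, x2*y2] =
     (\<Sum>(a, b)\<in>parts2 (sum_list [L0,L1,L2,L3]) \<times> parts2 (sum_list [L0,L1,L2,L3]). of_int (gf a b) * schur a [x1, x2] * schur b [y1, y2])"
    by (simp add: add.assoc)
qed

lemma kpred_unique:
  assumes g: "kpred [L0,L1,L2,L3] g"
  shows "g = gf"
proof -
  have sl: "sum_list [L0,L1,L2,L3] = NQ" by simp
  have g0: "\<forall>a b. (a, b) \<notin> parts2 NQ \<times> parts2 NQ \<longrightarrow> g a b = 0"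
    and g1: "\<forall>x1 x2 y1 y2 :: real. schur [L0,L1,L2,L3] [x1*y1, x1*y2, x2*y1, x2*y2] =
         (\<Sum>(a, b)\<in>parts2 NQ \<times> parts2 NQ. of_int (g a b) * schur a [x1, x2] * schur b [y1, y2])"
    using g unfolding kpred_def sl by blast+
  have f1: "\<forall>x1 x2 y1 y2 :: real. schur [L0,L1,L2,L3] [x1*y1, x1*y2, x2*y1, x2*y2] =
         (\<Sum>(a, b)\<in>parts2 NQ \<times> parts2 NQ. of_int (gf a b) * schur a [x1, x2] * schur b [y1, y2])"
    using gf_kpred unfolding kpred_def sl by blast
  have "\<forall>x1 x2 y1 y2. (\<Sum>a\<in>HH NQ. \<Sum>c\<in>HH NQ. (of_int (g [a,NQ-a] [c,NQ-c]) - of_int (gf [a,NQ-a] [c,NQ-c])) * S2 NQ a x1 x2 * S2 NQ c y1 y2) = (0::real)"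
  proof (intro allI)
    fix x1 x2 y1 y2 :: real
    have "(\<Sum>a\<in>HH NQ. \<Sum>c\<in>HH NQ. (of_int (g [a,NQ-a] [c,NQ-c]) - of_int (gf [a,NQ-a] [c,NQ-c])) * S2 NQ a x1 x2 * S2 NQ c y1 y2)
      = (\<Sum>a\<in>HH NQ. \<Sum>c\<in>HH NQ. of_int (g [a,NQ-a] [c,NQ-c]) * S2 NQ a x1 x2 * S2 NQ c y1 y2)
       - (\<Sum>a\<in>HH NQ. \<Sum>c\<in>HH NQ. of_int (gf [a,NQ-a] [c,NQ-c]) * S2 NQ a x1 x2 * S2 NQ c y1 y2)"
      by (simp add: sum_subtractf[symmetric] algebra_simps)
    also have "\<dots> = (\<Sum>(A,B)\<in>parts2 NQ \<times> parts2 NQ. of_int (g A B) * schur A [x1,x2] * schur B [y1,y2])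
        - (\<Sum>(A,B)\<in>parts2 NQ \<times> parts2 NQ. of_int (gf A B) * schur A [x1,x2] * schur B [y1,y2])"
      using reindex2[where E="\<lambda>A B. of_int (g A B)" and N=NQ] reindex2[where E="\<lambda>A B. of_int (gf A B)" and N=NQ]
      by simp
    also have "\<dots> = 0"
    proof -
      have e1: "schur [L0,L1,L2,L3] [x1*y1, x1*y2, x2*y1, x2*y2] = (\<Sum>(A,B)\<in>parts2 NQ \<times> parts2 NQ. of_int (g A B) * schur A [x1,x2] * schur B [y1,y2])"
        using g1 by blast
      have e2: "schur [L0,L1,L2,L3] [x1*y1, x1*y2, x2*y1, x2*y2] = (\<Sum>(A,B)\<in>parts2 NQ \<times> parts2 NQ. of_int (gf A B) * schur A [x1,x2] * schur B [y1,y2])"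
        using f1 by blast
      show ?thesis using e1 e2 by linarith
    qed
    finally show "(\<Sum>a\<in>HH NQ. \<Sum>c\<in>HH NQ. (of_int (g [a,NQ-a] [c,NQ-c]) - of_int (gf [a,NQ-a] [c,NQ-c])) * S2 NQ a x1 x2 * S2 NQ c y1 y2) = 0" .
  qed
  hence eq: "\<forall>a\<in>HH NQ. \<forall>c\<in>HH NQ. (of_int (g [a,NQ-a] [c,NQ-c]) - of_int (gf [a,NQ-a] [c,NQ-c])) = (0::real)"
    by (rule indep2)
  show ?thesis
  proof (intro ext)
    fix A B
    show "g A B = gf A B"
    proof (cases "(A,B) \<in> parts2 NQ \<times> parts2 NQ")
      case True
      then obtain a c where "a \<in> HH NQ" "c \<in> HH NQ" "A = [a,NQ-a]" "B = [c,NQ-c]"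
        unfolding parts2_eq by blast
      thus ?thesis using eq by auto
    next
      case False thus ?thesis using g0 by (auto simp: gf_def)
    qed
  qed
qed

lemma kron_val: "kron A B [L0,L1,L2,L3] = gf A B"
proof -
  have "(THE g. kpred [L0,L1,L2,L3] g) = gf"
    using gf_kpred kpred_unique by (intro the_equality) blast+
  thus ?thesis by (simp add: kron_kpred)
qed

end


lemma KK_main:
  assumes "S \<le> T" "T \<le> U"
  shows "KK U T S S (int (U+S)) (int (U+T)) = 1"
proof -
  have "{P\<in>GT U T S S. w0 P + w1 P = int (U+S) \<and> w0 P + w2 P = int (U+T)} = {(U,U,S,U,T,S)}"
    using assms by (auto simp: GT_def w0_def w1_def w2_def)
  thus ?thesis by (simp only: KK_def) simp
qed

lemma KK_zero1:
  assumes "S \<le> T" "T \<le> U"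
  shows "KK U T S S (int (Suc (U+S))) (int (U+T)) = 0"
proof -
  have "{P\<in>GT U T S S. w0 P + w1 P = int (Suc (U+S)) \<and> w0 P + w2 P = int (U+T)} = {}"
    using assms by (auto simp: GT_def w0_def w1_def w2_def)
  thus ?thesis by (simp only: KK_def card.empty)
qed

lemma KK_zero2:
  assumes "S \<le> T" "T \<le> U"
  shows "KK U T S S a (int (Suc (U+T))) = 0"
proof -
  have "{P\<in>GT U T S S. w0 P + w1 P = a \<and> w0 P + w2 P = int (Suc (U+T))} = {}"
    using assms by (auto simp: GT_def w0_def w1_def w2_def)
  thus ?thesis by (simp only: KK_def card.empty)
qed

lemma pS00: "pS 0 0 = 1"
proof -
  have "{(x1, x2, x3, x4). int x1 + int x3 + int x4 = (0::int) \<and> int x2 + int x3 + 2 * int x4 = (0::int)} = {(0::nat,0::nat,0::nat,0::nat)}"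
    by auto
  thus ?thesis by (simp add: pS_def)
qed

theorem proposition3p9:
  fixes u t s k :: nat
  assumes "s \<le> t" and "t \<le> u" and "1 \<le> k"
  shows "kron (scale k [u + s, t + s]) (scale k [u + t, 2 * s]) (scale k [u, t, s, s]) = 1
       \<and> atomic_kron (scale k [u + s, t + s]) (scale k [u + t, 2 * s]) (scale k [u, t, s, s]) = 1"
proof
  define U where "U = k*u"
  define T where "T = k*t"
  define S where "S = k*s"
  have ST: "S \<le> T" "T \<le> U" using assms by (auto simp: U_def T_def S_def)
  have la: "scale k [u, t, s, s] = [U,T,S,S]" by (simp add: scale_def U_def T_def S_def)
  have mu: "scale k [u + s, t + s] = [U+S, T+S]" by (simp add: scale_def U_def T_def S_def algebra_simps)
  have nu: "scale k [u + t, 2 * s] = [U+T, S+S]" by (simp add: scale_def U_def T_def S_def algebra_simps)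
  show "kron (scale k [u + s, t + s]) (scale k [u + t, 2 * s]) (scale k [u, t, s, s]) = 1"
  proof -
    have L: "S \<le> S" "S \<le> T" "T \<le> U" using ST by auto
    have p1: "[U+S, T+S] \<in> parts2 (U+T+S+S)" using ST by (auto simp: parts2_def)
    have p2: "[U+T, S+S] \<in> parts2 (U+T+S+S)" using ST by (auto simp: parts2_def)
    have "kron [U+S, T+S] [U+T, S+S] [U,T,S,S] = gf U T S S [U+S, T+S] [U+T, S+S]"
      by (rule kron_val[OF L])
    also have "\<dots> = Gi U T S S (U+S) (U+T)" using p1 p2 by (simp add: gf_def[OF L])
    also have "\<dots> = 1" using ST
      by (simp add: Gi_def[OF L] KK_main KK_zero1 KK_zero2 del: of_nat_add of_nat_Suc)
    finally show ?thesis by (simp add: la mu nu)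
  qed
  show "atomic_kron (scale k [u + s, t + s]) (scale k [u + t, 2 * s]) (scale k [u, t, s, s]) = 1"
    unfolding la mu nu atomic_kron_def by (simp add: pS00)
qed


end
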